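(* Consider the following setting. Fix a target toxicity probability $\phi\in(0,1)$ and constants $\delta_1,\delta_2>0$. Let the target key be $\mathcal I^*=(\phi-\delta_1,\phi+\delta_2)$, and let $\mathcal I_1,\dots,\mathcal I_K$ be the intervals ("keys") of common width $\delta_1+\delta_2$ obtained by successively adjoining adjacent intervals of this width to both sides of $\mathcal I^*$ as long as they stay within $[0,1]$, ordered from left to right, with $\mathcal I_{k^*}=\mathcal I^*$. At a given dose level $j$ with toxicity probability $p_j$, $n_j$ patients have been treated. For each patient $i$, $\delta_i\in\{0,1\}$ indicates whether the binary toxicity outcome $x_i$ has been ascertained, and each patient with $\delta_i=0$ (pending) has not experienced toxicity so far and carries a weight $w_i\in[0,1]$. Let $\tilde y_j=\sum_i\delta_ix_i$ (number of observed toxicities), $m_j=\sum_i\delta_i(1-x_i)$, and $\tilde m_j=m_j+\sum_i(1-\delta_i)w_i$. For nonnegative numbers $(y,m)$, define the decision $a(y,m)\in\{-1,0,1\}$ as follows: with $p_j$ having posterior distribution $\mathrm{Beta}(y+1,m+1)$ (i.e. uniform prior and binomial-type likelihood $p_j^{y}(1-p_j)^{m}$), let $k_s=\arg\max_{k=1,\dots,K}\Pr(p_j\in\mathcal I_k)$; set $a=1$ (escalate) if $k_s<k^*$, $a=0$ (stay) if $k_s=k^*$, and $a=-1$ (de-escalate) if $k_s>k^*$. The TITE-keyboard decision based on the observed interim data is $a(D_j^o)=a(\tilde y_j,\tilde m_j)$, and the decision based on the "cross-sectional" data $D_j^s=(n_j,\tilde y_j)$, which treats every pending patient as a non-toxicity,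 is $a(D_j^s)=a(\tilde y_j,n_j-\tilde y_j)$. Then the TITE-keyboard design is monotonic: $a(D_j^o)\le a(D_j^s)$ for every dose level $j$.
   Context: The weight $w_i$ represents $\Pr(t_i\le u_i\mid x_i=1)$, where $t_i$ is the time to toxicity and $u_i$ the patient's follow-up time so far, so $w_i\in[0,1]$. A dose-finding design is called monotonic if $a(D_j^o)\le a(D_j^s)$ for all $j$, where $a(\cdot)=-1,0,1$ denote de-escalation, staying at the current dose, and escalation. *)

theory Defs
  imports "HOL-Analysis.Analysis"
begin

text \<open>Keys are indexed by an integer offset k relative to the target key:
  key k = (phi - d1 + k*(d1+d2), phi + d2 + k*(d1+d2)); the target key has offset 0.
  Offsets increase from left to right.\<close>

definition key_lo :: "real \<Rightarrow> real \<Rightarrow> real \<Rightarrow> int \<Rightarrow> real" where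
  "key_lo phi d1 d2 k = phi - d1 + real_of_int k * (d1 + d2)"

definition key_hi :: "real \<Rightarrow> real \<Rightarrow> real \<Rightarrow> int \<Rightarrow> real" where
  "key_hi phi d1 d2 k = phi + d2 + real_of_int k * (d1 + d2)"

definition keys :: "real \<Rightarrow> real \<Rightarrow> real \<Rightarrow> int set" where
  "keys phi d1 d2 = {k. k = 0 \<or> (0 \<le> key_lo phi d1 d2 k \<and> key_hi phi d1 d2 k \<le> 1)}"

definition beta_post_prob :: "real \<Rightarrow> real \<Rightarrow> real \<Rightarrow> real \<Rightarrow> real" where
  "beta_post_prob y m a b =
     (LINT t:({a<..<b} \<inter> {0..1})|lborel. t powr y * (1 - t) powr m)
     / (LINT t:{0..1}|lborel. t powr y * (1 - t) powr m)"

definition key_prob :: "real \<Rightarrow> real \<Rightarrow> real \<Rightarrow> real \<Rightarrow> real \<Rightarrow> int \<Rightarrow> real" where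
  "key_prob phi d1 d2 y m k = beta_post_prob y m (key_lo phi d1 d2 k) (key_hi phi d1 d2 k)"

definition selected_key :: "real \<Rightarrow> real \<Rightarrow> real \<Rightarrow> real \<Rightarrow> real \<Rightarrow> int" where
  "selected_key phi d1 d2 y m =
     (LEAST k. k \<in> keys phi d1 d2 \<and>
        key_prob phi d1 d2 y m k = Max (key_prob phi d1 d2 y m ` keys phi d1 d2))"

definition keyboard_decision :: "real \<Rightarrow> real \<Rightarrow> real \<Rightarrow> real \<Rightarrow> real \<Rightarrow> int" where
  "keyboard_decision phi d1 d2 y m =
     (let ks = selected_key phi d1 d2 y m in
      if ks < 0 then 1 else if ks = 0 then 0 else -1)"

end

theory Submission
  imports Defs
begin

lemma F_int:
  assumes "0\<le>(y::real)" "0\<le>(m::real)" "S \<in> sets lborel" "S \<subseteq> {0..1}"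
  shows "set_integrable lborel S (\<lambda>t::real. t powr y * (1-t) powr m)"
proof -
  have "set_integrable lborel {0..1::real} (\<lambda>_. 1::real)"
    unfolding set_integrable_def by simp
  then have "set_integrable lborel S (\<lambda>_. 1::real)"
    by (rule set_integrable_subset) (use assms in auto)
  then show ?thesis
  proof (rule set_integrable_bound)
    show "set_borel_measurable lborel S (\<lambda>t::real. t powr y * (1-t) powr m)"
      unfolding set_borel_measurable_def using assms(3) by measurable
    show "AE x in lborel. x \<in> S \<longrightarrow> norm (x powr y * (1 - x) powr m) \<le> norm (1::real)"
    proof (rule AE_I2, rule impI)
      fix x assume "x \<in> S"
      then have x: "0 \<le> x" "x \<le> 1" using assms(4) by auto
      have "x powr y \<le> 1" using x assms by (intro powr_le1) auto
      moreover have "(1-x) powr m \<le> 1" using x assms by (intro powr_le1) auto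
      ultimately show "norm (x powr y * (1 - x) powr m) \<le> norm (1::real)"
        by (simp add: abs_mult mult_le_one)
    qed
  qed
qed

lemma N_pos:
  assumes "0\<le>(y::real)" "0\<le>(m::real)"
  shows "0 < (LINT t:{0..1}|lborel. t powr y * (1 - t) powr m)"
proof -
  define c where "c = (1/4::real) powr y * (1/4) powr m"
  have cpos: "0 < c" unfolding c_def by simp
  have i1: "set_integrable lborel {0..1::real} (\<lambda>t. c * indicator {1/4..3/4::real} t)"
  proof -
    have "(\<lambda>x. indicator {0..1::real} x *\<^sub>R (c * indicator {1/4..3/4::real} x)) = (\<lambda>x. indicator {1/4..3/4::real} x *\<^sub>R c)"
      by (auto simp: indicator_def)
    then show ?thesis unfolding set_integrable_def by (simp only:) (rule integrable_indicator, simp, rule emeasure_bounded_finite, simp)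
  qed
  have "(LINT t:{0..1}|lborel. c * indicator {1/4..3/4::real} t)
      \<le> (LINT t:{0..1}|lborel. t powr y * (1 - t) powr m)"
  proof (rule set_integral_mono[OF i1 F_int])
    fix t :: real assume t: "t \<in> {0..1}"
    show "c * indicator {1/4..3/4::real} t \<le> t powr y * (1 - t) powr m"
    proof (cases "t \<in> {1/4..3/4}")
      case True
      then have "(1/4) powr y \<le> t powr y" "(1/4) powr m \<le> (1-t) powr m"
        using assms by (auto intro!: powr_mono2)
      then show ?thesis using True unfolding c_def by (auto intro!: mult_mono)
    next
      case False then show ?thesis by simp
    qed
  qed (use assms in auto)
  moreover have "(LINT t:{0..1}|lborel. c * indicator {1/4..3/4::real} t) = c * (1/2)" (is "?L = _")
  proof -
    have "(LINT t:{0..1}|lborel. indicator {1/4..3/4::real} t) = 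
          integral\<^sup>L lborel (indicator {1/4..3/4::real} :: real \<Rightarrow> real)"
      unfolding set_lebesgue_integral_def
      by (rule Bochner_Integration.integral_cong) (auto simp: indicator_def)
    also have "\<dots> = 1/2" by simp
    finally show ?thesis by simp
  qed
  moreover have "0 < c * (1/2)" using cpos by simp
  ultimately show ?thesis by linarith
qed

lemma shift_lemma:
  assumes y: "0\<le>(y::real)" and m: "0\<le>(m1::real)" "m1 \<le> m2" and bc: "(b::real) \<le> c"
    and le: "beta_post_prob y m1 c e \<le> beta_post_prob y m1 a b"
  shows "beta_post_prob y m2 c e \<le> beta_post_prob y m2 a b"
proof -
  define d where "d = m2 - m1"
  have d: "0 \<le> d" using m unfolding d_def by simp
  define F where "F = (\<lambda>t::real. t powr y * (1 - t) powr m1)"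
  define G where "G = (\<lambda>t::real. t powr y * (1 - t) powr m2)"
  have GF: "G t = F t * (1-t) powr d" for t
    unfolding G_def F_def d_def by (simp add: powr_add[symmetric])
  have Fnn: "0 \<le> F t" for t unfolding F_def by simp
  define J1 where "J1 = {a<..<b} \<inter> {0..1::real}"
  define J2 where "J2 = {c<..<e} \<inter> {0..1::real}"
  have J: "J1 \<in> sets lborel" "J1 \<subseteq> {0..1}" "J2 \<in> sets lborel" "J2 \<subseteq> {0..1}"
    unfolding J1_def J2_def by auto
  have N1: "0 < (LINT t:{0..1}|lborel. F t)" unfolding F_def by (rule N_pos[OF y m(1)])
  have N2: "0 < (LINT t:{0..1}|lborel. G t)" unfolding G_def by (rule N_pos[OF y]) (use m in auto)
  have iF1: "set_integrable lborel J1 F" and iF2: "set_integrable lborel J2 F"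
    unfolding F_def using F_int[OF y m(1)] J by auto
  have iG1: "set_integrable lborel J1 G" and iG2: "set_integrable lborel J2 G"
    unfolding G_def using F_int[OF y] m J by auto
  have A: "(LINT t:J2|lborel. F t) \<le> (LINT t:J1|lborel. F t)"
    using le N1 unfolding beta_post_prob_def J1_def J2_def F_def
    by (simp add: divide_le_cancel)
  define \<beta> where "\<beta> = min 1 (max 0 b)"
  define \<rho> where "\<rho> = (1 - \<beta>) powr d"
  have rho: "0 \<le> \<rho>" unfolding \<rho>_def by simp
  have "(LINT t:J2|lborel. G t) \<le> (LINT t:J2|lborel. \<rho> * F t)"
  proof (rule set_integral_mono[OF iG2])
    show "set_integrable lborel J2 (\<lambda>t. \<rho> * F t)" using iF2 by simp
    fix t assume t: "t \<in> J2"
    then have "0 \<le> 1 - t" "1 - t \<le> 1 - \<beta>" using bc unfolding J2_def \<beta>_def by auto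
    then have "(1-t) powr d \<le> \<rho>" unfolding \<rho>_def using d by (rule powr_mono2[rotated])
    then show "G t \<le> \<rho> * F t" unfolding GF using Fnn[of t]
      by (metis mult.commute mult_left_mono)
  qed
  also have "\<dots> = \<rho> * (LINT t:J2|lborel. F t)" by simp
  also have "\<dots> \<le> \<rho> * (LINT t:J1|lborel. F t)" using A rho by (rule mult_left_mono)
  also have "\<dots> = (LINT t:J1|lborel. \<rho> * F t)" by simp
  also have "\<dots> \<le> (LINT t:J1|lborel. G t)"
  proof (rule set_integral_mono[OF _ iG1])
    show "set_integrable lborel J1 (\<lambda>t. \<rho> * F t)" using iF1 by simp
    fix t assume t: "t \<in> J1"
    then have "0 \<le> 1 - \<beta>" "1 - \<beta> \<le> 1 - t" unfolding J1_def \<beta>_def by auto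
    then have "\<rho> \<le> (1-t) powr d" unfolding \<rho>_def using d by (rule powr_mono2[rotated])
    then show "\<rho> * F t \<le> G t" unfolding GF using Fnn[of t]
      by (metis mult.commute mult_left_mono)
  qed
  finally have B: "(LINT t:J2|lborel. G t) \<le> (LINT t:J1|lborel. G t)" .
  show ?thesis
    using B N2 unfolding beta_post_prob_def J1_def J2_def G_def
    by (simp add: divide_right_mono)
qed

lemma least_min:
  fixes S :: "int set"
  assumes "finite S" "S \<noteq> {}"
  shows "(LEAST k. k \<in> S) = Min S"
  by (rule Least_equality) (use assms in auto)

lemma argmax_mono:
  fixes K :: "int set" and P1 P2 :: "int \<Rightarrow> real"
  assumes K: "finite K" "K \<noteq> {}"
    and H: "\<And>k1 k. k1 \<in> K \<Longrightarrow> k \<in> K \<Longrightarrow> k1 < k \<Longrightarrow> P1 k \<le> P1 k1 \<Longrightarrow> P2 k \<le> P2 k1"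
  shows "(LEAST k. k \<in> K \<and> P2 k = Max (P2 ` K)) \<le> (LEAST k. k \<in> K \<and> P1 k = Max (P1 ` K))"
proof -
  define S1 where "S1 = {k \<in> K. P1 k = Max (P1 ` K)}"
  define S2 where "S2 = {k \<in> K. P2 k = Max (P2 ` K)}"
  have f: "finite S1" "finite S2" unfolding S1_def S2_def using K by auto
  have "Max (P1 ` K) \<in> P1 ` K" using K by (intro Max_in) auto
  then have ne1: "S1 \<noteq> {}" unfolding S1_def by force
  have "Max (P2 ` K) \<in> P2 ` K" using K by (intro Max_in) auto
  then have ne2: "S2 \<noteq> {}" unfolding S2_def by force
  have e1: "(LEAST k. k \<in> K \<and> P1 k = Max (P1 ` K)) = Min S1"
    using least_min[OF f(1) ne1] unfolding S1_def by simp
  have e2: "(LEAST k. k \<in> K \<and> P2 k = Max (P2 ` K)) = Min S2"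
    using least_min[OF f(2) ne2] unfolding S2_def by simp
  define s1 where "s1 = Min S1"
  define s2 where "s2 = Min S2"
  have s1: "s1 \<in> K" "P1 s1 = Max (P1 ` K)" using Min_in[OF f(1) ne1] unfolding s1_def S1_def by auto
  have s2: "s2 \<in> K" "P2 s2 = Max (P2 ` K)" using Min_in[OF f(2) ne2] unfolding s2_def S2_def by auto
  have "s2 \<le> s1"
  proof (rule ccontr)
    assume "\<not> s2 \<le> s1"
    then have lt: "s1 < s2" by simp
    have "P1 s2 \<le> P1 s1" using s1 s2 K by simp
    then have "P2 s2 \<le> P2 s1" using H[OF s1(1) s2(1) lt] by simp
    moreover have "P2 s1 \<le> P2 s2" using s1 s2 K by simp
    ultimately have "s1 \<in> S2" using s1 s2 unfolding S2_def by simp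
    then have "s2 \<le> s1" unfolding s2_def using f(2) by simp
    then show False using lt by simp
  qed
  then show ?thesis using e1 e2 s1_def s2_def by simp
qed

lemma keys_finite:
  assumes "0 < d1" "0 < d2"
  shows "finite (keys phi d1 d2)"
proof -
  define D where "D = d1 + d2"
  have D: "0 < D" using assms unfolding D_def by simp
  have "keys phi d1 d2 \<subseteq> insert 0 {\<lfloor>(d1 - phi) / D\<rfloor> .. \<lceil>(1 - phi - d2) / D\<rceil>}"
  proof
    fix k assume "k \<in> keys phi d1 d2"
    then consider "k = 0" | "0 \<le> key_lo phi d1 d2 k" "key_hi phi d1 d2 k \<le> 1"
      unfolding keys_def by auto
    then show "k \<in> insert 0 {\<lfloor>(d1 - phi) / D\<rfloor> .. \<lceil>(1 - phi - d2) / D\<rceil>}"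
    proof cases
      case 2
      have "(d1 - phi) / D \<le> of_int k" using 2(1) D unfolding key_lo_def D_def
        by (simp add: divide_le_eq algebra_simps)
      then have a: "\<lfloor>(d1 - phi) / D\<rfloor> \<le> k" by (metis floor_mono floor_of_int)
      have "of_int k \<le> (1 - phi - d2) / D" using 2(2) D unfolding key_hi_def D_def
        by (simp add: le_divide_eq algebra_simps)
      then have b: "k \<le> \<lceil>(1 - phi - d2) / D\<rceil>" by (metis ceiling_mono ceiling_of_int)
      show ?thesis using a b by simp
    qed simp
  qed
  then show ?thesis by (rule finite_subset) simp
qed

lemma keys_order:
  assumes "0 < d1" "0 < d2" "k1 < k"
  shows "key_hi phi d1 d2 k1 \<le> key_lo phi d1 d2 k"
proof -
  have "real_of_int k1 + 1 \<le> real_of_int k" using assms(3) by linarith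
  then have "0 \<le> (real_of_int k - real_of_int k1 - 1) * (d1 + d2)" using assms by simp
  then show ?thesis unfolding key_hi_def key_lo_def by (simp add: algebra_simps)
qed

theorem theorem2:
  fixes phi d1 d2 :: real and n :: nat
    and obs :: "nat \<Rightarrow> bool" and x w :: "nat \<Rightarrow> real"
  assumes "0 < phi" "phi < 1" "0 < d1" "0 < d2"
    and "\<forall>i<n. x i \<in> {0, 1}"
    and "\<forall>i<n. \<not> obs i \<longrightarrow> 0 \<le> w i \<and> w i \<le> 1"
  shows "keyboard_decision phi d1 d2
           (\<Sum>i<n. if obs i then x i else 0)
           ((\<Sum>i<n. if obs i then 1 - x i else 0) + (\<Sum>i<n. if obs i then 0 else w i))
         \<le> keyboard_decision phi d1 d2
           (\<Sum>i<n. if obs i then x i else 0)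
           (real n - (\<Sum>i<n. if obs i then x i else 0))"
proof -
  define y where "y = (\<Sum>i<n. if obs i then x i else 0)"
  define m1 where "m1 = (\<Sum>i<n. if obs i then 1 - x i else 0) + (\<Sum>i<n. if obs i then 0 else w i)"
  define m2 where "m2 = real n - y"
  have y0: "0 \<le> y" unfolding y_def using assms(5) by (intro sum_nonneg) auto
  have m1eq: "m1 = (\<Sum>i<n. if obs i then 1 - x i else w i)"
    unfolding m1_def sum.distrib[symmetric] by (intro sum.cong) auto
  have m2eq: "m2 = (\<Sum>i<n. if obs i then 1 - x i else 1)"
  proof -
    have "(\<Sum>i<n. if obs i then 1 - x i else 1) = (\<Sum>i<n. 1 - (if obs i then x i else 0))"
      by (intro sum.cong) auto
    also have "\<dots> = real n - y" unfolding y_def by (simp add: sum_subtractf)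
    finally show ?thesis unfolding m2_def by simp
  qed
  have m10: "0 \<le> m1" unfolding m1eq using assms(5,6) by (intro sum_nonneg) auto
  have m12: "m1 \<le> m2" unfolding m1eq m2eq using assms(6) by (intro sum_mono) auto
  have K: "finite (keys phi d1 d2)" "keys phi d1 d2 \<noteq> {}"
    using keys_finite[OF assms(3,4)] unfolding keys_def by auto
  have "selected_key phi d1 d2 y m2 \<le> selected_key phi d1 d2 y m1"
    unfolding selected_key_def
  proof (rule argmax_mono[OF K])
    fix k1 k assume "k1 < k" and le: "key_prob phi d1 d2 y m1 k \<le> key_prob phi d1 d2 y m1 k1"
    have o: "key_hi phi d1 d2 k1 \<le> key_lo phi d1 d2 k" using keys_order[OF assms(3,4) \<open>k1 < k\<close>] .
    show "key_prob phi d1 d2 y m2 k \<le> key_prob phi d1 d2 y m2 k1"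
      using shift_lemma[OF y0 m10 m12 o] le unfolding key_prob_def by blast
  qed
  then show ?thesis unfolding y_def[symmetric] m1_def[symmetric] m2_def[symmetric] keyboard_decision_def Let_def
    by auto
qed

end
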